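(* Let $\alpha,\beta,\gamma\in\mathbb{Z}_2^n$ with $\alpha\ne0$, let $\omega=\omega(\alpha,\beta,\gamma)$ and $\omega'=\omega(-\alpha,\beta,\gamma)$. Then for all $i\in\{0,\dots,7\}$, $$e_iA_{\omega_0}\cdots A_{\omega_{n-1}}e_0^T=e_{i\oplus4}A_{\omega'_0}\cdots A_{\omega'_{n-1}}e_0^T.$$
   Context: For $x\in\mathbb{Z}_2^n$, $x=(x_0,\dots,x_{n-1})$ is identified with the integer $\sum_i x_i2^{n-1-i}$ and $-x$ is computed modulo $2^n$. For $\alpha,\beta,\gamma\in\mathbb{Z}_2^n$, $\omega(\alpha,\beta,\gamma)_i=4\alpha_i+2\beta_i+\gamma_i$. Indices $0,\dots,7$ are identified with $\mathbb{Z}_2^3$ via $(p_0,p_1,p_2)\leftrightarrow4p_0+2p_1+p_2$ (so $\oplus$ is bitwise XOR of 3-bit vectors); $e_0,\dots,e_7$ are the standard basis row vectors of $\mathbb{Q}^8$. $A_0$ is $\frac14$ times the $8\times8$ matrix with rows $(4,0,0,1,0,1,1,0)$, $(0,0,0,1,0,1,0,0)$, $(0,0,0,1,0,0,1,0)$, $(0,0,0,1,0,0,0,0)$, $(0,0,0,0,0,1,1,0)$, $(0,0,0,0,0,1,0,0)$, $(0,0,0,0,0,0,1,0)$, $(0,\dots,0)$, and $(A_k)_{i,j}=(A_0)_{i\oplus k,j\oplus k}$. *)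

theory Defs
  imports Main "Jordan_Normal_Form.Matrix"
begin

text \<open>Elements of Z_2^n are bit lists x = [x_0,...,x_{n-1}] of length n;
  x is identified with the integer sum_i x_i 2^(n-1-i) (x_0 most significant).\<close>

definition bits_val :: "bool list \<Rightarrow> nat" where
  "bits_val x = (\<Sum>i<length x. (if x ! i then 2 ^ (length x - 1 - i) else 0))"

definition bits_of_val :: "nat \<Rightarrow> nat \<Rightarrow> bool list" where
  "bits_of_val n v = map (\<lambda>i. odd (v div 2 ^ (n - 1 - i))) [0..<n]"

definition bits_neg :: "bool list \<Rightarrow> bool list" where
  "bits_neg x = bits_of_val (length x)
      ((2 ^ length x - bits_val x) mod 2 ^ length x)"

definition omega :: "bool list \<Rightarrow> bool list \<Rightarrow> bool list \<Rightarrow> nat list" where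
  "omega a b c = map (\<lambda>i. 4 * of_bool (a ! i) + 2 * of_bool (b ! i) + of_bool (c ! i))
                    [0..<length a]"

definition A0_rows :: "rat list list" where
  "A0_rows = [[4,0,0,1,0,1,1,0],
              [0,0,0,1,0,1,0,0],
              [0,0,0,1,0,0,1,0],
              [0,0,0,1,0,0,0,0],
              [0,0,0,0,0,1,1,0],
              [0,0,0,0,0,1,0,0],
              [0,0,0,0,0,0,1,0],
              [0,0,0,0,0,0,0,0]]"

definition A0 :: "rat mat" where
  "A0 = mat 8 8 (\<lambda>(i, j). A0_rows ! i ! j / 4)"

definition Amat :: "nat \<Rightarrow> rat mat" where
  "Amat k = mat 8 8 (\<lambda>(i, j). A0 $$ (xor i k, xor j k))"

definition prodA :: "nat list \<Rightarrow> rat mat" where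
  "prodA w = foldr (\<lambda>k M. Amat k * M) w (1\<^sub>m 8)"

end

theory Submission
  imports Defs
begin


fun F :: "nat list \<Rightarrow> (nat \<Rightarrow> rat) \<Rightarrow> nat \<Rightarrow> rat" where
  "F [] v i = v i"
| "F (k # w) v i = (\<Sum>j\<in>{0..<8}. Amat k $$ (i, j) * F w v j)"

lemma prodA_carrier: "prodA w \<in> carrier_mat 8 8"
  by (induction w) (auto simp: prodA_def Amat_def)

lemma prodA_F: "i < 8 \<Longrightarrow> prodA w $$ (i, 0) = F w (\<lambda>j. if j = 0 then 1 else 0) i"
proof (induction w arbitrary: i)
  case Nil
  then show ?case by (simp add: prodA_def)
next
  case (Cons k w)
  have c: "prodA w \<in> carrier_mat 8 8" by (rule prodA_carrier)
  have "prodA (k # w) = Amat k * prodA w" by (simp add: prodA_def)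
  then have "prodA (k # w) $$ (i, 0) = (\<Sum>j\<in>{0..<8}. Amat k $$ (i, j) * prodA w $$ (j, 0))"
    using c Cons.prems by (simp add: Amat_def scalar_prod_def)
  also have "\<dots> = F (k # w) (\<lambda>j. if j = 0 then 1 else 0) i"
    using Cons.IH by simp
  finally show ?case .
qed

lemma F_append: "F (w1 @ w2) v i = F w1 (F w2 v) i"
  by (induction w1 arbitrary: i) auto

lemma F_cong: "(\<And>j. j < 8 \<Longrightarrow> v j = v' j) \<Longrightarrow> i < 8 \<Longrightarrow> F w v i = F w v' i"
  by (induction w arbitrary: i) auto


lemma less8: "(i::nat) < 8 \<longleftrightarrow> i \<in> {0,1,2,3,4,5,6,7}" by auto
lemma less4: "(i::nat) < 4 \<longleftrightarrow> i \<in> {0,1,2,3}" by auto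

lemma xor44: "xor (xor (i::nat) 4) 4 = i"
  by (simp add: xor.assoc)


lemma xor_lt8: "(i::nat) < 8 \<Longrightarrow> k < 8 \<Longrightarrow> xor i k < 8"
proof -
  assume a: "i < 8" "k < 8"
  have "take_bit 3 i = i" "take_bit 3 k = k" using a by (simp_all add: take_bit_nat_eq_self_iff)
  then have "xor i k = take_bit 3 (xor i k)" by (metis take_bit_xor)
  also have "\<dots> < 2 ^ 3" by (rule take_bit_nat_less_exp)
  finally show ?thesis by simp
qed

lemma xor4_lt: "(i::nat) < 8 \<Longrightarrow> xor i 4 < 8"
  using xor_lt8[of i 4] by simp

lemma Amat_eq: "i < 8 \<Longrightarrow> j < 8 \<Longrightarrow> k < 8 \<Longrightarrow> Amat k $$ (i, j) = A0_rows ! (xor i k) ! (xor j k) / 4"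
proof -
  assume a: "i < 8" "j < 8" "k < 8"
  have "xor i k < 8" "xor j k < 8" using a xor_lt8 by auto
  then show ?thesis using a by (simp add: Amat_def A0_def)
qed

lemma Amat_conj: "Amat (xor k 4) $$ (i, j) = Amat k $$ (xor i 4, xor j 4)" if "i < 8" "j < 8"
  using that xor4_lt[OF that(1)] xor4_lt[OF that(2)]
  by (simp add: Amat_def xor.assoc xor.left_commute xor.commute)

lemma p8: "(i::nat) < 8 \<Longrightarrow> (i, xor i 4) \<in> {(0,4),(1,5),(2,6),(3,7),(4,0),(5,1),(6,2),(7,3)}"
  unfolding less8 by (elim insertE) auto

lemma t1: "\<forall>k\<in>{0,1,2,3::nat}. \<forall>i\<in>{4,5,6,7::nat}. \<forall>j\<in>{0,1,2,3::nat}. A0_rows ! (xor i k) ! (xor j k) = 0"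
  by (simp add: A0_rows_def)
lemma t2: "\<forall>k\<in>{4,5,6,7::nat}. \<forall>(i,i')\<in>{(0,4),(1,5),(2,6),(3,7),(4,0),(5,1),(6,2),(7,3::nat)}. \<forall>j\<in>{0,1,2,3::nat}. A0_rows ! (xor i' k) ! (xor j k) = A0_rows ! (xor i k) ! (xor j k)"
  by (simp add: A0_rows_def)

lemma Amat_supp: "k < 4 \<Longrightarrow> 4 \<le> i \<Longrightarrow> i < 8 \<Longrightarrow> j < 4 \<Longrightarrow> Amat k $$ (i, j) = 0"
proof -
  assume a: "k < 4" "4 \<le> i" "i < 8" "j < 4"
  then have m: "k \<in> {0,1,2,3}" "i \<in> {4,5,6,7}" "j \<in> {0,1,2,3}" by auto
  have "Amat k $$ (i, j) = A0_rows ! (xor i k) ! (xor j k) / 4"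
    using a by (intro Amat_eq) auto
  also have "A0_rows ! (xor i k) ! (xor j k) = 0" using t1 m by blast
  finally show ?thesis by simp
qed

lemma Amat_sym: "4 \<le> k \<Longrightarrow> k < 8 \<Longrightarrow> i < 8 \<Longrightarrow> j < 4 \<Longrightarrow> Amat k $$ (xor i 4, j) = Amat k $$ (i, j)"
proof -
  assume a: "4 \<le> k" "k < 8" "i < 8" "j < 4"
  then have m: "k \<in> {4,5,6,7}" "(i, xor i 4) \<in> {(0,4),(1,5),(2,6),(3,7),(4,0),(5,1),(6,2),(7,3)}" "j \<in> {0,1,2,3}"
    using p8 by auto
  have "Amat k $$ (xor i 4, j) = A0_rows ! (xor (xor i 4) k) ! (xor j k) / 4"
    using a xor4_lt by (intro Amat_eq) auto
  also have "\<dots> = A0_rows ! (xor i k) ! (xor j k) / 4" using bspec[OF bspec[OF t2 m(1)] m(2)] m(3) by auto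
  also have "\<dots> = Amat k $$ (i, j)"
    using a by (intro Amat_eq[symmetric]) auto
  finally show ?thesis .
qed


lemma F_conj: "i < 8 \<Longrightarrow> F (map (\<lambda>k. xor k 4) w) v i = F w (\<lambda>j. v (xor j 4)) (xor i 4)"
proof (induction w arbitrary: i)
  case Nil
  then show ?case by (simp add: xor44)
next
  case (Cons k w)
  have "F (map (\<lambda>k. xor k 4) (k # w)) v i
      = (\<Sum>j\<in>{0..<8}. Amat k $$ (xor i 4, xor j 4) * F w (\<lambda>j. v (xor j 4)) (xor j 4))"
    unfolding list.map F.simps using Cons by (intro sum.cong refl) (auto simp: Amat_conj)
  also have "\<dots> = (\<Sum>j\<in>{0..<8}. Amat k $$ (xor i 4, j) * F w (\<lambda>j. v (xor j 4)) j)"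
    by (rule sum.reindex_bij_witness[where i="\<lambda>j. xor j 4" and j="\<lambda>j. xor j 4"])
       (auto simp: xor44 xor4_lt)
  finally show ?case by simp
qed

lemma F_supp: "(\<forall>k\<in>set w. k < 4) \<Longrightarrow> 4 \<le> i \<Longrightarrow> i < 8 \<Longrightarrow> F w (\<lambda>j. if j = 0 then 1 else 0) i = 0"
proof (induction w arbitrary: i)
  case Nil
  then show ?case by simp
next
  case (Cons k w)
  have "\<And>j::nat. j \<in> {0..<8} \<Longrightarrow> Amat k $$ (i, j) * F w (\<lambda>j. if j = 0 then 1 else 0) j = 0"
  proof -
    fix j :: nat assume "j \<in> {0..<8}"
    then show "Amat k $$ (i, j) * F w (\<lambda>j. if j = 0 then 1 else 0) j = 0"
      using Cons Amat_supp[of k i j] by (cases "j < 4") auto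
  qed
  then show ?case by (simp only: F.simps) (rule sum.neutral, blast)
qed

lemma F_sym: "4 \<le> k \<Longrightarrow> k < 8 \<Longrightarrow> (\<And>j. 4 \<le> j \<Longrightarrow> j < 8 \<Longrightarrow> v j = 0) \<Longrightarrow> i < 8
  \<Longrightarrow> F [k] v (xor i 4) = F [k] v i"
proof -
  assume a: "4 \<le> k" "k < 8" "\<And>j. 4 \<le> j \<Longrightarrow> j < 8 \<Longrightarrow> v j = 0" "i < 8"
  have "\<And>j. j \<in> {0..<8} \<Longrightarrow> Amat k $$ (xor i 4, j) * v j = Amat k $$ (i, j) * v j"
  proof -
    fix j :: nat assume "j \<in> {0..<8}"
    then show "Amat k $$ (xor i 4, j) * v j = Amat k $$ (i, j) * v j"
      using a Amat_sym[of k i j] by (cases "j < 4") auto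
  qed
  then show ?thesis by (simp only: F.simps) (rule sum.cong[OF refl], blast)
qed



lemma bv_Nil: "bits_val [] = 0" by (simp add: bits_val_def)

lemma bv_Cons: "bits_val (a # xs) = of_bool a * 2 ^ length xs + bits_val xs"
proof -
  have e: "\<And>i. Suc (length xs) - 1 - Suc i = length xs - 1 - i" by arith
  show ?thesis unfolding bits_val_def by (simp only: length_Cons sum.lessThan_Suc_shift e nth_Cons_Suc) simp
qed

lemma bv_lt: "bits_val xs < 2 ^ length xs"
  by (induction xs) (auto simp: bv_Nil bv_Cons)

lemma bv_high: "length xs \<le> e \<Longrightarrow> \<not> bit (bits_val xs) e"
proof -
  assume a: "length xs \<le> e"
  have "(2::nat) ^ length xs \<le> 2 ^ e" using a by (rule power_increasing) simp
  then have "bits_val xs < 2 ^ e" using bv_lt[of xs] by linarith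
  then have "bits_val xs div 2 ^ e = 0" by (rule div_less)
  then show ?thesis by (simp add: bit_iff_odd)
qed

lemma bit_Cons: "bit (bits_val (a # xs)) e \<longleftrightarrow> (a \<and> e = length xs) \<or> bit (bits_val xs) e"
proof (cases a)
  case True
  have d: "\<not> bit ((2::nat) ^ length xs) m \<or> \<not> bit (bits_val xs) m" for m
    using bv_high[of xs m] by (cases "m = length xs") (simp_all add: bit_exp_iff)
  have d2: "bit (2 ^ length xs + bits_val xs) e \<longleftrightarrow> bit ((2::nat) ^ length xs) e \<or> bit (bits_val xs) e"
    by (rule bit_disjunctive_add_iff) (rule d)
  have eq: "bits_val (a # xs) = 2 ^ length xs + bits_val xs" unfolding bv_Cons using True by simp
  have p: "bit ((2::nat) ^ length xs) e \<longleftrightarrow> e = length xs" by (simp add: bit_exp_iff)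
  show ?thesis unfolding eq d2 p using True by blast
next
  case False
  have "bits_val (a # xs) = bits_val xs" unfolding bv_Cons using False by simp
  then show ?thesis using False by simp
qed

lemma bit_bv: "bit (bits_val x) e \<longleftrightarrow> e < length x \<and> x ! (length x - 1 - e)"
proof (induction x arbitrary: e)
  case Nil
  then show ?case by (simp add: bv_Nil)
next
  case (Cons a xs)
  let ?n = "length xs"
  note h = bit_Cons[of a xs e]
  consider "e < ?n" | "e = ?n" | "e > ?n" by linarith
  then show ?case
  proof cases
    case 1
    then have "(a # xs) ! (length (a # xs) - 1 - e) = xs ! (?n - 1 - e)"
      by (simp add: nth_Cons' diff_diff_left)
    then show ?thesis using 1 h Cons.IH[of e] by simp
  next
    case 2
    then show ?thesis using h bv_high[of xs e] by simp
  next
    case 3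
    then show ?thesis using h bv_high[of xs e] by simp
  qed
qed

lemma bov_bv: "bits_of_val (length x) (bits_val x) = x"
proof (rule nth_equalityI)
  show "length (bits_of_val (length x) (bits_val x)) = length x" by (simp add: bits_of_val_def)
  fix i assume "i < length (bits_of_val (length x) (bits_val x))"
  then have i: "i < length x" by (simp add: bits_of_val_def)
  have "bits_of_val (length x) (bits_val x) ! i = odd (bits_val x div 2 ^ (length x - 1 - i))"
    using i by (simp add: bits_of_val_def)
  also have "\<dots> = bit (bits_val x) (length x - 1 - i)" by (rule bit_iff_odd[symmetric])
  also have "\<dots> = x ! i"
  proof -
    have e: "length x - 1 - i < length x" "length x - 1 - (length x - 1 - i) = i" using i by arith+
    show ?thesis unfolding bit_bv e(2) using e(1) by blast
  qed
  finally show "bits_of_val (length x) (bits_val x) ! i = x ! i" .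
qed

lemma bv_append: "bits_val (xs @ ys) = bits_val xs * 2 ^ length ys + bits_val ys"
  by (induction xs) (auto simp: bv_Nil bv_Cons power_add algebra_simps)

lemma bv_not: "bits_val (map Not xs) + bits_val xs + 1 = 2 ^ length xs"
  by (induction xs) (auto simp: bv_Nil bv_Cons)

lemma bv_rep: "bits_val (replicate m False) = 0"
  by (induction m) (auto simp: bv_Nil bv_Cons)

lemma neg_decomp: "bits_neg (pre @ True # replicate m False) = map Not pre @ True # replicate m False"
proof -
  let ?a = "pre @ True # replicate m False"
  let ?t = "map Not pre @ True # replicate m False"
  let ?n = "length ?a"
  have ln: "length ?t = ?n" by simp
  have va: "bits_val ?a = bits_val pre * 2 ^ Suc m + 2 ^ m"
    by (simp add: bv_append bv_Cons bv_rep)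
  have vt: "bits_val ?t = bits_val (map Not pre) * 2 ^ Suc m + 2 ^ m"
    by (simp add: bv_append bv_Cons bv_rep)
  have n: "?n = length pre + Suc m" by simp
  have "bits_val ?t + bits_val ?a = (bits_val (map Not pre) + bits_val pre + 1) * 2 ^ Suc m"
    using va vt by (simp add: algebra_simps)
  also have "\<dots> = 2 ^ ?n" using bv_not[of pre] n by (simp add: power_add)
  finally have s: "bits_val ?t + bits_val ?a = 2 ^ ?n" .
  have "bits_val ?t < 2 ^ ?n" using bv_lt[of ?t] ln by simp
  then have "(2 ^ ?n - bits_val ?a) mod 2 ^ ?n = bits_val ?t" using s by simp
  then have "bits_neg ?a = bits_of_val (length ?t) (bits_val ?t)"
    unfolding bits_neg_def using ln by simp
  then show ?thesis by (metis bov_bv)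
qed

lemma decomp: "x \<noteq> replicate (length x) False \<Longrightarrow> \<exists>pre m. x = pre @ True # replicate m False"
proof (induction x rule: rev_induct)
  case Nil
  then show ?case by simp
next
  case (snoc a xs)
  show ?case
  proof (cases a)
    case True
    then show ?thesis by (intro exI[of _ xs] exI[of _ 0]) simp
  next
    case False
    have "xs \<noteq> replicate (length xs) False"
    proof
      assume "xs = replicate (length xs) False"
      then have "xs @ [a] = replicate (length (xs @ [a])) False"
        using False by (metis length_append_singleton replicate_Suc replicate_append_same)
      then show False using snoc.prems by simp
    qed
    then obtain pre m where "xs = pre @ True # replicate m False" using snoc.IH by blast
    then show ?thesis using False
      by (intro exI[of _ pre] exI[of _ "Suc m"]) (simp add: replicate_append_same)
  qed
qed

lemma xor_om: "xor (4 * of_bool a + 2 * of_bool b + of_bool c :: nat) 4 = 4 * of_bool (\<not> a) + 2 * of_bool b + of_bool c"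
  by (cases a; cases b; cases c) (simp_all add: numeral_3_eq_3[symmetric] numeral_2_eq_2[symmetric])


theorem lemma2:
  fixes n :: nat and \<alpha> \<beta> \<gamma> :: "bool list"
  assumes "length \<alpha> = n" "length \<beta> = n" "length \<gamma> = n"
    and "\<alpha> \<noteq> replicate n False"
    and "i < 8"
  shows "prodA (omega \<alpha> \<beta> \<gamma>) $$ (i, 0)
       = prodA (omega (bits_neg \<alpha>) \<beta> \<gamma>) $$ (xor i 4, 0)"
proof -
  obtain pre m where al: "\<alpha> = pre @ True # replicate m False"
    using decomp assms(1,4) by blast
  define p where "p = length pre"
  have n: "n = p + Suc m" using assms(1) al p_def by simp
  define \<alpha>' where "\<alpha>' = map Not pre @ True # replicate m False"
  have neg: "bits_neg \<alpha> = \<alpha>'" unfolding al \<alpha>'_def by (rule neg_decomp)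
  have la': "length \<alpha>' = n" using n p_def \<alpha>'_def by simp
  define f where "f = (\<lambda>i. 4 * of_bool (\<alpha> ! i) + 2 * of_bool (\<beta> ! i) + of_bool (\<gamma> ! i) :: nat)"
  define f' where "f' = (\<lambda>i. 4 * of_bool (\<alpha>' ! i) + 2 * of_bool (\<beta> ! i) + of_bool (\<gamma> ! i) :: nat)"
  have om: "omega \<alpha> \<beta> \<gamma> = map f [0..<n]" unfolding omega_def f_def using assms(1) by simp
  have om': "omega (bits_neg \<alpha>) \<beta> \<gamma> = map f' [0..<n]" unfolding omega_def f'_def neg using la' by simp
  have up: "[0..<n] = [0..<p] @ p # [Suc p..<n]"
    unfolding n using upt_add_eq_append[of 0 p "Suc m"] upt_conv_Cons[of p "p + Suc m"] by simp
  define W1 where "W1 = map f [0..<p]"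
  define W2 where "W2 = map f [Suc p..<n]"
  define k where "k = f p"
  have o1: "omega \<alpha> \<beta> \<gamma> = W1 @ [k] @ W2" unfolding om up W1_def W2_def k_def by simp
  have a_lt: "\<alpha> ! j = pre ! j" "\<alpha>' ! j = (\<not> pre ! j)" if "j < p" for j
    using that unfolding al \<alpha>'_def p_def by (simp_all add: nth_append)
  have a_p: "\<alpha> ! p = True" "\<alpha>' ! p = True"
    unfolding al \<alpha>'_def p_def by (simp_all add: nth_append)
  have a_gt: "\<alpha> ! j = False" "\<alpha>' ! j = False" if "p < j" "j < n" for j
  proof -
    have "j - p \<noteq> 0" "j - p - 1 < m" using that n by arith+
    then show "\<alpha> ! j = False" "\<alpha>' ! j = False"
      using that unfolding al \<alpha>'_def p_def by (simp_all add: nth_append nth_Cons')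
  qed
  have m1: "map f' [0..<p] = map (\<lambda>k. xor k 4) W1"
    unfolding W1_def map_map
  proof (rule map_cong[OF refl])
    fix j assume "j \<in> set [0..<p]"
    then have j: "j < p" by simp
    show "f' j = ((\<lambda>k. xor k 4) \<circ> f) j"
      unfolding f'_def f_def comp_def a_lt[OF j] xor_om by simp
  qed
  have m2: "map f' [Suc p..<n] = W2"
    unfolding W2_def
  proof (rule map_cong[OF refl])
    fix j assume "j \<in> set [Suc p..<n]"
    then have j: "p < j" "j < n" by auto
    show "f' j = f j" unfolding f'_def f_def a_gt[OF j] by simp
  qed
  have m3: "f' p = k" unfolding f'_def f_def k_def a_p by simp
  have o2: "omega (bits_neg \<alpha>) \<beta> \<gamma> = map (\<lambda>k. xor k 4) W1 @ [k] @ W2"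
    unfolding om' up using m1 m2 m3 by simp
  have k4: "4 \<le> k" "k < 8" unfolding k_def f_def a_p
    by (cases "\<beta> ! p"; cases "\<gamma> ! p"; simp)+
  have W2s: "\<forall>k\<in>set W2. k < 4"
  proof
    fix x assume "x \<in> set W2"
    then obtain j where j: "p < j" "j < n" "x = f j" unfolding W2_def by (auto simp: Suc_le_eq)
    show "x < 4" unfolding j(3) f_def a_gt[OF j(1,2)]
      by (cases "\<beta> ! j"; cases "\<gamma> ! j"; simp)
  qed
  define e0 where "e0 = (\<lambda>j::nat. if j = 0 then (1::rat) else 0)"
  define v where "v = F W2 e0"
  define u where "u = F [k] v"
  have vs: "\<And>j. 4 \<le> j \<Longrightarrow> j < 8 \<Longrightarrow> v j = 0"
    unfolding v_def e0_def using F_supp[OF W2s] by blast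
  have us: "u (xor j 4) = u j" if "j < 8" for j
    unfolding u_def using F_sym[OF k4 vs that] by simp
  have i4: "xor i 4 < 8" using assms(5) by (rule xor4_lt)
  have "prodA (omega \<alpha> \<beta> \<gamma>) $$ (i, 0) = F W1 u i"
    unfolding prodA_F[OF assms(5)] o1 F_append u_def v_def e0_def by simp
  moreover have "prodA (omega (bits_neg \<alpha>) \<beta> \<gamma>) $$ (xor i 4, 0) = F W1 u i"
  proof -
    have "prodA (omega (bits_neg \<alpha>) \<beta> \<gamma>) $$ (xor i 4, 0) = F (map (\<lambda>k. xor k 4) W1) u (xor i 4)"
      unfolding prodA_F[OF i4] o2 F_append u_def v_def e0_def by simp
    also have "\<dots> = F W1 (\<lambda>j. u (xor j 4)) i"
      using F_conj[OF i4] by (simp add: xor44)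
    also have "\<dots> = F W1 u i"
      by (rule F_cong[OF us assms(5)])
    finally show ?thesis .
  qed
  ultimately show ?thesis by simp
qed

end
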